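(* Let $(N,+,* )$ be a planar nearring presented by $(\Phi,R,M)$, and let $d\in D(N)$ be nonzero and not a zero multiplier. Then $d\Phi^*=d\Phi\cup\{0\}$ is a subnearring of $N$ which is a planar nearfield (with multiplicative identity $r_d$).
   Context: A (right) nearring $(N,+,* )$ is a set with a group $(N,+)$, a semigroup $(N,* )$, and right distributivity $(a+b)*c=a*c+b*c$. $N$ is planar if the relation $a\cong b$ ($x*a=x*b$ for all $x$) has at least $3$ classes and for all $a,b,c$ with $a\not\cong b$ the equation $x*a=x*b+c$ has a unique solution. A nearfield is a nearring in which $(N\setminus\{0\},* )$ is a group; a subnearring is a subset closed under $+$, additive inverses and $*$. Every planar nearring arises as follows, and we always consider it so presented. $\Phi\le \mathrm{Aut}(N,+)$ acts on the right, is fixed point free, and $n\mapsto -n+n\phi$ is bijective for each $\phi\ne\mathrm{id}$. $R$ is a set of representatives of the $\Phi$-orbits of $N\setminus\{0\}$ and $M\subseteq R$. Each $a\ne0$ is uniquely $a=r_a\phi_a$, $r_a\in R$, $\phi_a\in\Phi$. Multiplication: $a*b=0$ if $b=0$ or $r_b\in M$, else $a*b=a\phi_b$ (and $0*b=0$). The zero multipliers are the elements of $M\Phi\cup\{0\}$, i.e. those $n$ with $x*n=0$ for all $x$. $D(N)=\{n: n*(a+b)=n*a+n*b\ \forall a,b\}$. *)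

theory Defs
  imports Main "HOL-Algebra.Group"
begin

text \<open>The additive group (N,+) is the type 'a of class group_add (not necessarily
commutative). Automorphisms act on the right: n\<phi> is written \<phi> n.\<close>

definition is_nearring :: "('a::group_add \<Rightarrow> 'a \<Rightarrow> 'a) \<Rightarrow> bool" where
  "is_nearring mul \<longleftrightarrow>
     (\<forall>a b c. mul (mul a b) c = mul a (mul b c)) \<and>
     (\<forall>a b c. mul (a + b) c = mul a c + mul b c)"

definition cong_rel :: "'a set \<Rightarrow> ('a \<Rightarrow> 'a \<Rightarrow> 'a) \<Rightarrow> 'a \<Rightarrow> 'a \<Rightarrow> bool" where
  "cong_rel S mul a b \<longleftrightarrow> (\<forall>x\<in>S. mul x a = mul x b)"

definition planar_on :: "'a::group_add set \<Rightarrow> ('a \<Rightarrow> 'a \<Rightarrow> 'a) \<Rightarrow> bool" where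
  "planar_on S mul \<longleftrightarrow>
     (\<exists>a\<in>S. \<exists>b\<in>S. \<exists>c\<in>S. \<not> cong_rel S mul a b \<and> \<not> cong_rel S mul a c \<and> \<not> cong_rel S mul b c) \<and>
     (\<forall>a\<in>S. \<forall>b\<in>S. \<forall>c\<in>S. \<not> cong_rel S mul a b \<longrightarrow> (\<exists>!x. x \<in> S \<and> mul x a = mul x b + c))"

definition subnearring :: "'a::group_add set \<Rightarrow> ('a \<Rightarrow> 'a \<Rightarrow> 'a) \<Rightarrow> bool" where
  "subnearring S mul \<longleftrightarrow>
     (\<forall>a\<in>S. \<forall>b\<in>S. a + b \<in> S) \<and> (\<forall>a\<in>S. - a \<in> S) \<and> (\<forall>a\<in>S. \<forall>b\<in>S. mul a b \<in> S)"

definition nearfield_on :: "'a::group_add set \<Rightarrow> ('a \<Rightarrow> 'a \<Rightarrow> 'a) \<Rightarrow> 'a \<Rightarrow> bool" where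
  "nearfield_on S mul e \<longleftrightarrow> group \<lparr>carrier = S - {0}, monoid.mult = mul, monoid.one = e\<rparr>"

definition planar_presentation :: "('a::group_add \<Rightarrow> 'a) set \<Rightarrow> 'a set \<Rightarrow> 'a set \<Rightarrow> bool" where
  "planar_presentation \<Phi> R M \<longleftrightarrow>
     (\<forall>\<phi>\<in>\<Phi>. bij \<phi> \<and> (\<forall>x y. \<phi> (x + y) = \<phi> x + \<phi> y)) \<and>
     id \<in> \<Phi> \<and> (\<forall>\<phi>\<in>\<Phi>. \<forall>\<psi>\<in>\<Phi>. \<phi> \<circ> \<psi> \<in> \<Phi>) \<and> (\<forall>\<phi>\<in>\<Phi>. Hilbert_Choice.inv \<phi> \<in> \<Phi>) \<and>
     (\<forall>\<phi>\<in>\<Phi>. \<phi> \<noteq> id \<longrightarrow> (\<forall>n. \<phi> n = n \<longrightarrow> n = 0)) \<and>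
     (\<forall>\<phi>\<in>\<Phi>. \<phi> \<noteq> id \<longrightarrow> bij (\<lambda>n. - n + \<phi> n)) \<and>
     0 \<notin> R \<and> (\<forall>a. a \<noteq> 0 \<longrightarrow> (\<exists>!r. r \<in> R \<and> (\<exists>\<phi>\<in>\<Phi>. a = \<phi> r))) \<and>
     M \<subseteq> R"

definition rep :: "('a::group_add \<Rightarrow> 'a) set \<Rightarrow> 'a set \<Rightarrow> 'a \<Rightarrow> 'a" where
  "rep \<Phi> R a = (THE r. r \<in> R \<and> (\<exists>\<phi>\<in>\<Phi>. a = \<phi> r))"

definition phi_of :: "('a::group_add \<Rightarrow> 'a) set \<Rightarrow> 'a set \<Rightarrow> 'a \<Rightarrow> ('a \<Rightarrow> 'a)" where
  "phi_of \<Phi> R a = (THE \<phi>. \<phi> \<in> \<Phi> \<and> a = \<phi> (rep \<Phi> R a))"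

definition pmult :: "('a::group_add \<Rightarrow> 'a) set \<Rightarrow> 'a set \<Rightarrow> 'a set \<Rightarrow> 'a \<Rightarrow> 'a \<Rightarrow> 'a" where
  "pmult \<Phi> R M a b = (if b = 0 \<or> rep \<Phi> R b \<in> M then 0 else phi_of \<Phi> R b a)"

definition distributive_elems :: "('a::group_add \<Rightarrow> 'a \<Rightarrow> 'a) \<Rightarrow> 'a set" where
  "distributive_elems mul = {n. \<forall>a b. mul n (a + b) = mul n a + mul n b}"

definition zero_multipliers :: "('a::group_add \<Rightarrow> 'a \<Rightarrow> 'a) \<Rightarrow> 'a set" where
  "zero_multipliers mul = {n. \<forall>x. mul x n = 0}"

end

theory Submission
  imports Defs
begin

lemma ppD_hom:
  assumes "planar_presentation \<Phi> R M"
  shows "\<forall>\<phi>\<in>\<Phi>. bij \<phi> \<and> (\<forall>x y. \<phi> (x + y) = \<phi> x + \<phi> y)"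
  using assms unfolding planar_presentation_def by (elim conjE) assumption

lemma ppD_id:
  assumes "planar_presentation \<Phi> R M"
  shows "id \<in> \<Phi>"
  using assms unfolding planar_presentation_def by (elim conjE) assumption

lemma ppD_comp:
  assumes "planar_presentation \<Phi> R M"
  shows "\<forall>\<phi>\<in>\<Phi>. \<forall>\<psi>\<in>\<Phi>. \<phi> \<circ> \<psi> \<in> \<Phi>"
  using assms unfolding planar_presentation_def by (elim conjE) assumption

lemma ppD_inv:
  assumes "planar_presentation \<Phi> R M"
  shows "\<forall>\<phi>\<in>\<Phi>. Hilbert_Choice.inv \<phi> \<in> \<Phi>"
  using assms unfolding planar_presentation_def by (elim conjE) assumption

lemma ppD_fpf:
  assumes "planar_presentation \<Phi> R M"
  shows "\<forall>\<phi>\<in>\<Phi>. \<phi> \<noteq> id \<longrightarrow> (\<forall>n. \<phi> n = n \<longrightarrow> n = 0)"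
  using assms unfolding planar_presentation_def by (elim conjE) assumption

lemma ppD_0R:
  assumes "planar_presentation \<Phi> R M"
  shows "0 \<notin> R"
  using assms unfolding planar_presentation_def by (elim conjE) assumption

lemma ppD_orb:
  assumes "planar_presentation \<Phi> R M"
  shows "\<forall>a. a \<noteq> 0 \<longrightarrow> (\<exists>!r. r \<in> R \<and> (\<exists>\<phi>\<in>\<Phi>. a = \<phi> r))"
  using assms unfolding planar_presentation_def by (elim conjE) assumption

lemma ppD_M:
  assumes "planar_presentation \<Phi> R M"
  shows "M \<subseteq> R"
  using assms unfolding planar_presentation_def by (elim conjE) assumption

lemma pp_hom0:
  assumes "planar_presentation \<Phi> R M" "\<phi> \<in> \<Phi>"
  shows "\<phi> 0 = 0"
proof -
  have h: "\<forall>x y. \<phi> (x + y) = \<phi> x + \<phi> y" using ppD_hom[OF assms(1)] assms(2) by blast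
  have z: "\<phi> (0 + 0) = \<phi> 0" by simp
  have e: "\<phi> 0 = \<phi> 0 + \<phi> 0" using z[symmetric] h[rule_format, of 0 0] by (rule trans)
  have "\<phi> 0 + \<phi> 0 = \<phi> 0 + 0" using e[symmetric] add_0_right[of "\<phi> 0", symmetric] by (rule trans)
  then show ?thesis by (rule add_left_imp_eq)
qed

lemma pp_bij:
  assumes "planar_presentation \<Phi> R M" "\<phi> \<in> \<Phi>"
  shows "bij \<phi>"
  using ppD_hom[OF assms(1)] assms(2) by blast

lemma pp_nz:
  assumes "planar_presentation \<Phi> R M" "\<phi> \<in> \<Phi>" "r \<noteq> 0"
  shows "\<phi> r \<noteq> 0"
proof
  assume "\<phi> r = 0"
  then have "\<phi> r = \<phi> 0" using pp_hom0[OF assms(1,2)] by simp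
  then have "r = 0" by (rule injD[OF bij_is_inj[OF pp_bij[OF assms(1,2)]]])
  then show False using assms(3) by simp
qed

lemma pp_uniq:
  assumes P: "planar_presentation \<Phi> R M" and "\<phi> \<in> \<Phi>" "\<psi> \<in> \<Phi>" "r \<noteq> 0" "\<phi> r = \<psi> r"
  shows "\<phi> = \<psi>"
proof -
  have bp: "bij \<psi>" using pp_bij[OF P assms(3)] .
  have c: "Hilbert_Choice.inv \<psi> \<circ> \<phi> \<in> \<Phi>" using ppD_comp[OF P] ppD_inv[OF P] assms(2,3) by blast
  have "(Hilbert_Choice.inv \<psi> \<circ> \<phi>) r = r" using assms(5) bp by (simp add: bij_is_inj)
  then have "Hilbert_Choice.inv \<psi> \<circ> \<phi> = id" using ppD_fpf[OF P] c assms(4) by blast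
  then have i: "\<And>x. Hilbert_Choice.inv \<psi> (\<phi> x) = x" by (simp add: fun_eq_iff)
  have "\<And>x. \<phi> x = \<psi> x"
  proof -
    fix x
    have "\<psi> (Hilbert_Choice.inv \<psi> (\<phi> x)) = \<phi> x" using bp by (simp add: bij_is_surj surj_f_inv_f)
    then show "\<phi> x = \<psi> x" using i[of x] by simp
  qed
  then show ?thesis by (simp add: fun_eq_iff)
qed

lemma pp_rep:
  assumes P: "planar_presentation \<Phi> R M" and "a \<noteq> 0"
  shows "rep \<Phi> R a \<in> R \<and> phi_of \<Phi> R a \<in> \<Phi> \<and> a = phi_of \<Phi> R a (rep \<Phi> R a)"
proof -
  have ex: "\<exists>!r. r \<in> R \<and> (\<exists>\<phi>\<in>\<Phi>. a = \<phi> r)" using ppD_orb[OF P] assms(2) by blast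
  have r: "rep \<Phi> R a \<in> R \<and> (\<exists>\<phi>\<in>\<Phi>. a = \<phi> (rep \<Phi> R a))"
    unfolding rep_def by (rule theI'[OF ex])
  have r0: "rep \<Phi> R a \<noteq> 0" using conjunct1[OF r] ppD_0R[OF P] by metis
  obtain \<phi>0 where \<phi>0: "\<phi>0 \<in> \<Phi>" "a = \<phi>0 (rep \<Phi> R a)" using r by blast
  have ex2: "\<exists>!\<phi>. \<phi> \<in> \<Phi> \<and> a = \<phi> (rep \<Phi> R a)"
  proof (rule ex1I[of _ \<phi>0])
    show "\<phi>0 \<in> \<Phi> \<and> a = \<phi>0 (rep \<Phi> R a)" using \<phi>0 by blast
    fix \<psi> assume h: "\<psi> \<in> \<Phi> \<and> a = \<psi> (rep \<Phi> R a)"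
    have "\<psi> (rep \<Phi> R a) = \<phi>0 (rep \<Phi> R a)" using h \<phi>0(2) by argo
    then show "\<psi> = \<phi>0" using pp_uniq[OF P conjunct1[OF h] \<phi>0(1) r0] by blast
  qed
  have "phi_of \<Phi> R a \<in> \<Phi> \<and> a = phi_of \<Phi> R a (rep \<Phi> R a)"
    unfolding phi_of_def by (rule theI'[OF ex2])
  then show ?thesis using r by blast
qed

lemma pp_rep_orbit:
  assumes P: "planar_presentation \<Phi> R M" and "r \<in> R" "\<phi> \<in> \<Phi>"
  shows "rep \<Phi> R (\<phi> r) = r \<and> phi_of \<Phi> R (\<phi> r) = \<phi>"
proof -
  have r0: "r \<noteq> 0" using ppD_0R[OF P] assms(2) by auto
  have nz: "\<phi> r \<noteq> 0" using pp_nz[OF P assms(3) r0] .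
  have ex: "\<exists>!r'. r' \<in> R \<and> (\<exists>\<psi>\<in>\<Phi>. \<phi> r = \<psi> r')" using ppD_orb[OF P] nz by blast
  have A: "rep \<Phi> R (\<phi> r) = r" unfolding rep_def
    by (rule the1_equality[OF ex]) (use assms(2,3) in blast)
  have B: "phi_of \<Phi> R (\<phi> r) \<in> \<Phi>" "\<phi> r = phi_of \<Phi> R (\<phi> r) r" using pp_rep[OF P nz] unfolding A by blast+
  have "phi_of \<Phi> R (\<phi> r) r = \<phi> r" using B(2) by (rule sym)
  then have "phi_of \<Phi> R (\<phi> r) = \<phi>" by (rule pp_uniq[OF P B(1) assms(3) r0])
  with A show ?thesis by (intro conjI)
qed

lemma pm_orbit:
  assumes P: "planar_presentation \<Phi> R M" and "r \<in> R" "r \<notin> M" "\<phi> \<in> \<Phi>"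
  shows "pmult \<Phi> R M x (\<phi> r) = \<phi> x"
proof -
  have r0: "r \<noteq> 0" using ppD_0R[OF P] assms(2) by auto
  have "rep \<Phi> R (\<phi> r) = r" "phi_of \<Phi> R (\<phi> r) = \<phi>" using pp_rep_orbit[OF P assms(2,4)] by blast+
  moreover have "\<not> (\<phi> r = 0 \<or> rep \<Phi> R (\<phi> r) \<in> M)" using pp_nz[OF P assms(4) r0] assms(3) calculation(1) by metis
  ultimately show ?thesis unfolding pmult_def by (metis (full_types))
qed

theorem mainTheorem3:
  fixes \<Phi> :: "('a::group_add \<Rightarrow> 'a) set" and R M :: "'a set" and d :: 'a
  assumes "planar_presentation \<Phi> R M"
    and "is_nearring (pmult \<Phi> R M)"
    and "planar_on UNIV (pmult \<Phi> R M)"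
    and "d \<in> distributive_elems (pmult \<Phi> R M)"
    and "d \<noteq> 0"
    and "d \<notin> zero_multipliers (pmult \<Phi> R M)"
  shows "subnearring ((\<lambda>\<phi>. \<phi> d) ` \<Phi> \<union> {0}) (pmult \<Phi> R M)
       \<and> nearfield_on ((\<lambda>\<phi>. \<phi> d) ` \<Phi> \<union> {0}) (pmult \<Phi> R M) (rep \<Phi> R d)
       \<and> planar_on ((\<lambda>\<phi>. \<phi> d) ` \<Phi> \<union> {0}) (pmult \<Phi> R M)"
proof -
  note P = assms(1)
  define mul where "mul = pmult \<Phi> R M"
  define rd where "rd = rep \<Phi> R d"
  define fd where "fd = phi_of \<Phi> R d"
  define T where "T = (\<lambda>\<phi>. \<phi> rd) ` \<Phi>"
  have rdfd: "rd \<in> R" "fd \<in> \<Phi>" "d = fd rd" using pp_rep[OF P assms(5)] rd_def fd_def by auto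
  have rdM: "rd \<notin> M" using assms(6) assms(5) unfolding zero_multipliers_def pmult_def rd_def by auto
  have rd0: "rd \<noteq> 0" using rdfd(1) ppD_0R[OF P] by auto
  have assoc: "\<And>a b c. mul (mul a b) c = mul a (mul b c)" using assms(2) unfolding is_nearring_def mul_def by blast
  have distr: "\<And>a b. mul d (a + b) = mul d a + mul d b" using assms(4) unfolding distributive_elems_def mul_def by blast
  have comp: "\<And>\<phi> \<psi>. \<phi> \<in> \<Phi> \<Longrightarrow> \<psi> \<in> \<Phi> \<Longrightarrow> \<phi> \<circ> \<psi> \<in> \<Phi>" using ppD_comp[OF P] by blast
  have invc: "\<And>\<phi>. \<phi> \<in> \<Phi> \<Longrightarrow> Hilbert_Choice.inv \<phi> \<in> \<Phi>" using ppD_inv[OF P] by blast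
  have idc: "id \<in> \<Phi>" using ppD_id[OF P] .
  have morb: "\<And>x \<psi>. \<psi> \<in> \<Phi> \<Longrightarrow> mul x (\<psi> rd) = \<psi> x" unfolding mul_def using pm_orbit[OF P rdfd(1) rdM] by blast
  have mz: "\<And>x. mul x 0 = 0" unfolding mul_def pmult_def by simp
  have T0: "0 \<notin> T" unfolding T_def using pp_nz[OF P _ rd0] by auto
  have rdT: "rd \<in> T" unfolding T_def using idc by (intro image_eqI[where x=id]) simp_all
  have SE: "(\<lambda>\<phi>. \<phi> d) ` \<Phi> \<union> {0} = T \<union> {0}"
  proof -
    have "(\<lambda>\<phi>. \<phi> d) ` \<Phi> \<subseteq> T" unfolding T_def using rdfd comp by (auto intro!: image_eqI[where x="_ \<circ> fd"])
    moreover have "T \<subseteq> (\<lambda>\<phi>. \<phi> d) ` \<Phi>"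
    proof
      fix y assume "y \<in> T"
      then obtain \<psi> where \<psi>: "\<psi> \<in> \<Phi>" "y = \<psi> rd" unfolding T_def by blast
      have "Hilbert_Choice.inv fd d = rd" using rdfd pp_bij[OF P rdfd(2)] by (simp add: bij_is_inj)
      then have "y = (\<psi> \<circ> Hilbert_Choice.inv fd) d" using \<psi> by simp
      then show "y \<in> (\<lambda>\<phi>. \<phi> d) ` \<Phi>" using comp[OF \<psi>(1) invc[OF rdfd(2)]] by blast
    qed
    ultimately show ?thesis by blast
  qed
  have md: "\<And>z. mul d z \<in> T \<union> {0}"
  proof -
    fix z
    show "mul d z \<in> T \<union> {0}"
    proof (cases "z = 0 \<or> rep \<Phi> R z \<in> M")
      case True then show ?thesis unfolding mul_def pmult_def by simp
    next
      case False
      then have "mul d z = (phi_of \<Phi> R z \<circ> fd) rd" unfolding mul_def pmult_def using rdfd by simp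
      moreover have "phi_of \<Phi> R z \<circ> fd \<in> \<Phi>" using comp rdfd pp_rep[OF P] False by blast
      ultimately show ?thesis unfolding T_def by blast
    qed
  qed
  have dm: "\<And>c. c \<in> T \<union> {0} \<Longrightarrow> \<exists>w. c = mul d w"
  proof -
    fix c assume "c \<in> T \<union> {0}"
    then consider "c = 0" | \<psi> where "\<psi> \<in> \<Phi>" "c = \<psi> rd" unfolding T_def by blast
    then show "\<exists>w. c = mul d w"
    proof cases
      case 1 then show ?thesis using mz by metis
    next
      case 2
      have "Hilbert_Choice.inv fd d = rd" using rdfd pp_bij[OF P rdfd(2)] by (simp add: bij_is_inj)
      then have "mul d ((\<psi> \<circ> Hilbert_Choice.inv fd) rd) = c"
        using morb[OF comp[OF 2(1) invc[OF rdfd(2)]]] 2 by simp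
      then show ?thesis by metis
    qed
  qed
  have mT: "\<And>a b. a \<in> T \<union> {0} \<Longrightarrow> b \<in> T \<union> {0} \<Longrightarrow> mul a b \<in> T \<union> {0}"
  proof -
    fix a b assume a: "a \<in> T \<union> {0}" and b: "b \<in> T \<union> {0}"
    show "mul a b \<in> T \<union> {0}"
    proof (cases "b = 0")
      case True then show ?thesis using mz by simp
    next
      case False
      then obtain \<psi> where \<psi>: "\<psi> \<in> \<Phi>" "b = \<psi> rd" using b unfolding T_def by blast
      show ?thesis
      proof (cases "a = 0")
        case True then show ?thesis using \<psi> morb pp_hom0[OF P] by simp
      next
        case False
        then obtain \<phi> where \<phi>: "\<phi> \<in> \<Phi>" "a = \<phi> rd" using a unfolding T_def by blast
        have "mul a b = (\<psi> \<circ> \<phi>) rd" using \<psi> \<phi> morb by simp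
        then show ?thesis using comp[OF \<psi>(1) \<phi>(1)] unfolding T_def by blast
      qed
    qed
  qed
  have SN: "subnearring (T \<union> {0}) mul"
    unfolding subnearring_def
  proof (intro conjI ballI)
    fix a b assume "a \<in> T \<union> {0}" "b \<in> T \<union> {0}"
    then obtain u v where "a = mul d u" "b = mul d v" using dm by metis
    then have "a + b = mul d (u + v)" using distr by simp
    then show "a + b \<in> T \<union> {0}" using md by simp
  next
    fix a assume "a \<in> T \<union> {0}"
    then obtain u where u: "a = mul d u" using dm by metis
    have "mul d u + mul d (- u) = 0" using distr[of u "-u"] mz by simp
    then have "- mul d u = mul d (- u)" by (rule minus_unique)
    then have "- a = mul d (- u)" using u by simp
    then show "- a \<in> T \<union> {0}" using md by simp
  next
    fix a b assume "a \<in> T \<union> {0}" "b \<in> T \<union> {0}"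
    then show "mul a b \<in> T \<union> {0}" using mT by blast
  qed
  have C: "T \<union> {0} - {0} = T" using T0 by blast
  have NF: "nearfield_on (T \<union> {0}) mul rd"
    unfolding nearfield_on_def C
  proof (rule groupI; simp only: partial_object.select_convs monoid.select_convs)
    show "\<And>x y. x \<in> T \<Longrightarrow> y \<in> T \<Longrightarrow> mul x y \<in> T"
    proof -
      fix x y assume "x \<in> T" "y \<in> T"
      then have "mul x y \<in> T \<union> {0}" "mul x y \<noteq> 0"
      proof -
        show "mul x y \<in> T \<union> {0}" using mT \<open>x \<in> T\<close> \<open>y \<in> T\<close> by blast
        obtain \<phi> where \<phi>: "\<phi> \<in> \<Phi>" "x = \<phi> rd" using \<open>x \<in> T\<close> unfolding T_def by blast
        obtain \<psi> where \<psi>: "\<psi> \<in> \<Phi>" "y = \<psi> rd" using \<open>y \<in> T\<close> unfolding T_def by blast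
        have "mul x y = \<psi> x" using morb[OF \<psi>(1)] \<psi>(2) by simp
        moreover have "x \<noteq> 0" using \<open>x \<in> T\<close> T0 by blast
        ultimately show "mul x y \<noteq> 0" using pp_nz[OF P \<psi>(1)] by simp
      qed
      then show "mul x y \<in> T" by blast
    qed
    show "rd \<in> T" by (rule rdT)
    show "\<And>x y z. x \<in> T \<Longrightarrow> y \<in> T \<Longrightarrow> z \<in> T \<Longrightarrow> mul (mul x y) z = mul x (mul y z)"
      by (rule assoc)
    show "\<And>x. x \<in> T \<Longrightarrow> mul rd x = x"
    proof -
      fix x assume "x \<in> T"
      then obtain \<psi> where \<psi>: "\<psi> \<in> \<Phi>" "x = \<psi> rd" unfolding T_def by blast
      show "mul rd x = x" using morb[OF \<psi>(1)] \<psi>(2) by simp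
    qed
    show "\<And>x. x \<in> T \<Longrightarrow> \<exists>y\<in>T. mul y x = rd"
    proof -
      fix x assume "x \<in> T"
      then obtain \<psi> where \<psi>: "\<psi> \<in> \<Phi>" "x = \<psi> rd" unfolding T_def by blast
      define y where "y = Hilbert_Choice.inv \<psi> rd"
      have "y \<in> T" unfolding y_def T_def using invc[OF \<psi>(1)] by blast
      moreover have "\<psi> y = rd" unfolding y_def
        using pp_bij[OF P \<psi>(1)] by (simp add: bij_is_surj surj_f_inv_f)
      then have "mul y x = rd" using morb[OF \<psi>(1)] \<psi>(2) by simp
      ultimately show "\<exists>y\<in>T. mul y x = rd" by blast
    qed
  qed
  have tau: "\<exists>\<tau>\<in>\<Phi>. \<tau> \<noteq> id"
  proof (rule ccontr)
    assume "\<not> ?thesis"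
    then have Pid: "\<And>\<phi>. \<phi> \<in> \<Phi> \<Longrightarrow> \<phi> = id" by blast
    have tcase: "\<And>a. (\<forall>x. mul x a = 0) \<or> (\<forall>x. mul x a = x)"
    proof -
      fix a show "(\<forall>x. mul x a = 0) \<or> (\<forall>x. mul x a = x)"
      proof (cases "a = 0 \<or> rep \<Phi> R a \<in> M")
        case True then show ?thesis unfolding mul_def pmult_def by simp
      next
        case False
        then have "phi_of \<Phi> R a = id" using Pid pp_rep[OF P] by blast
        then show ?thesis using False unfolding mul_def pmult_def by simp
      qed
    qed
    obtain a b c where "\<not> cong_rel UNIV mul a b" "\<not> cong_rel UNIV mul a c" "\<not> cong_rel UNIV mul b c"
      using assms(3) unfolding planar_on_def mul_def by blast
    then show False using tcase[of a] tcase[of b] tcase[of c] unfolding cong_rel_def by metis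
  qed
  have PL: "planar_on (T \<union> {0}) mul"
    unfolding planar_on_def
  proof (intro conjI ballI impI)
    obtain \<tau> where \<tau>: "\<tau> \<in> \<Phi>" "\<tau> \<noteq> id" using tau by blast
    have t0: "\<tau> rd \<noteq> 0" using pp_nz[OF P \<tau>(1) rd0] .
    have trd: "\<tau> rd \<noteq> rd" using pp_uniq[OF P \<tau>(1) idc rd0] \<tau>(2) by auto
    have tT: "\<tau> rd \<in> T" unfolding T_def using \<tau> by blast
    have m1: "mul rd rd = rd" using morb[OF idc, of rd] by simp
    have m2: "mul rd (\<tau> rd) = \<tau> rd" using morb[OF \<tau>(1)] by simp
    have "\<not> cong_rel (T \<union> {0}) mul 0 rd" unfolding cong_rel_def using rdT mz m1 rd0 by force
    moreover have "\<not> cong_rel (T \<union> {0}) mul 0 (\<tau> rd)" unfolding cong_rel_def using rdT mz m2 t0 by force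
    moreover have "\<not> cong_rel (T \<union> {0}) mul rd (\<tau> rd)" unfolding cong_rel_def using rdT m1 m2 trd by force
    ultimately show "\<exists>a\<in>T \<union> {0}. \<exists>b\<in>T \<union> {0}. \<exists>c\<in>T \<union> {0}. \<not> cong_rel (T \<union> {0}) mul a b \<and> \<not> cong_rel (T \<union> {0}) mul a c \<and> \<not> cong_rel (T \<union> {0}) mul b c"
      using rdT tT by blast
  next
    fix a b c assume ab: "a \<in> T \<union> {0}" "b \<in> T \<union> {0}" "c \<in> T \<union> {0}" and nc: "\<not> cong_rel (T \<union> {0}) mul a b"
    have ncU: "\<not> cong_rel UNIV mul a b" using nc unfolding cong_rel_def by blast
    obtain w where w: "c = mul d w" using dm ab(3) by blast
    have U: "\<And>c'. \<exists>!x. x \<in> UNIV \<and> mul x a = mul x b + c'"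
      using assms(3) ncU unfolding planar_on_def mul_def by blast
    obtain z where z: "mul z a = mul z b + w" using U[of w] by blast
    have "mul (mul d z) a = mul (mul d z) b + c"
      using assoc z distr w by simp
    moreover have "mul d z \<in> T \<union> {0}" using md .
    ultimately show "\<exists>!x. x \<in> T \<union> {0} \<and> mul x a = mul x b + c"
      using U[of c] by blast
  qed
  show ?thesis using SN NF PL SE unfolding mul_def rd_def by simp
qed

end
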